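(* Let $m_1,m_2,n_1\in\mathbb Z_+$. Then $$|\mathcal T(m_1,m_2,n_1)|=|\mathcal T(m_1-1,m_2,n_1-1)|+|\mathcal T^1(m_1+1,m_2-1,n_1-1)|+|\mathcal T^2(m_1-1,m_2,n_1-1)|+|\mathcal T^3(m_1,m_2,n_1)|.$$
   Context: (Type $G_2$ with $\mu(h_2)=0$: here $m_i=\lambda(h_i)$, $n_1=\mu(h_1)$, and shifting $\lambda\mapsto\lambda\pm\varpi_i$, $\mu\mapsto\mu-\varpi_1$ shifts the parameters accordingly.) For arbitrary integers $m_1,m_2,n_1$ define: $\mathcal T(m_1,m_2,n_1)=\{(a,b,c,d,e,f)\in\mathbb Z_+^6: a+b+c+d+e+f\le n_1,\ c\le1,\ b+e-d\le m_2,\ f\le m_1,\ e\le m_2,\ a-2b+2d-e+f\le m_1,\ c+f+2d-e\le m_1\}$; $\mathcal T^1(m_1,m_2,n_1)=\{(a,b,c,d,e)\in\mathbb Z_+^5: a+b+c+d+e\le n_1,\ c\le1,\ b+e-d\le m_2,\ e\le m_2,\ a-2b+2d-e\le m_1,\ c+2d-e\le m_1\}$; $\mathcal T^2(m_1,m_2,n_1)=\{(a,b,c,y)\in\mathbb Z_+^4: a+2b+c+y\le n_1+m_2,\ c\le1,\ a+2y\le m_1+2m_2,\ c+2b+2y\le m_1+2m_2,\ y+b\ge m_2\}$; $\mathcal T^3(m_1,m_2,n_1)=\{(a,b,c,y)\in\mathcal T^2(m_1,m_2,n_1): a=0\ \text{or}\ c+2b+2y=m_1+2m_2\}$. *)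

theory Defs
  imports Main
begin

definition T6 :: "int \<Rightarrow> int \<Rightarrow> int \<Rightarrow> (int \<times> int \<times> int \<times> int \<times> int \<times> int) set" where
  "T6 m1 m2 n1 = {(a,b,c,d,e,f). 0 \<le> a \<and> 0 \<le> b \<and> 0 \<le> c \<and> 0 \<le> d \<and> 0 \<le> e \<and> 0 \<le> f \<and>
     a+b+c+d+e+f \<le> n1 \<and> c \<le> 1 \<and> b+e-d \<le> m2 \<and> f \<le> m1 \<and> e \<le> m2 \<and>
     a-2*b+2*d-e+f \<le> m1 \<and> c+f+2*d-e \<le> m1}"

definition T1 :: "int \<Rightarrow> int \<Rightarrow> int \<Rightarrow> (int \<times> int \<times> int \<times> int \<times> int) set" where
  "T1 m1 m2 n1 = {(a,b,c,d,e). 0 \<le> a \<and> 0 \<le> b \<and> 0 \<le> c \<and> 0 \<le> d \<and> 0 \<le> e \<and>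
     a+b+c+d+e \<le> n1 \<and> c \<le> 1 \<and> b+e-d \<le> m2 \<and> e \<le> m2 \<and>
     a-2*b+2*d-e \<le> m1 \<and> c+2*d-e \<le> m1}"

definition T2 :: "int \<Rightarrow> int \<Rightarrow> int \<Rightarrow> (int \<times> int \<times> int \<times> int) set" where
  "T2 m1 m2 n1 = {(a,b,c,y). 0 \<le> a \<and> 0 \<le> b \<and> 0 \<le> c \<and> 0 \<le> y \<and>
     a+2*b+c+y \<le> n1+m2 \<and> c \<le> 1 \<and> a+2*y \<le> m1+2*m2 \<and> c+2*b+2*y \<le> m1+2*m2 \<and> y+b \<ge> m2}"

definition T3 :: "int \<Rightarrow> int \<Rightarrow> int \<Rightarrow> (int \<times> int \<times> int \<times> int) set" where
  "T3 m1 m2 n1 = {(a,b,c,y) \<in> T2 m1 m2 n1. a = 0 \<or> c+2*b+2*y = m1+2*m2}"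

end

theory Submission
  imports Defs
begin

lemma split_card:
  assumes "A = f ` B \<union> g ` C" "f ` B \<inter> g ` C = {}" "inj_on f B" "inj_on g C"
    "finite B" "finite C"
  shows "card A = card B + card C"
  using assms by (simp add: card_Un_disjoint card_image)

lemma fin_T1: "finite (T1 m1 m2 n1)"
proof -
  have "T1 m1 m2 n1 \<subseteq> {0..n1} \<times> {0..n1} \<times> {0..n1} \<times> {0..n1} \<times> {0..n1}"
    unfolding T1_def by auto
  thus ?thesis by (rule finite_subset) simp
qed

lemma fin_T6: "finite (T6 m1 m2 n1)"
proof -
  have "T6 m1 m2 n1 \<subseteq> {0..n1} \<times> {0..n1} \<times> {0..n1} \<times> {0..n1} \<times> {0..n1} \<times> {0..n1}"
    unfolding T6_def by auto
  thus ?thesis by (rule finite_subset) simp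
qed

lemma fin_T2: "finite (T2 m1 m2 n1)"
proof -
  have "T2 m1 m2 n1 \<subseteq> {0..n1+m2} \<times> {0..n1+m2} \<times> {0..n1+m2} \<times> {0..n1+m2}"
    unfolding T2_def by auto
  thus ?thesis by (rule finite_subset) simp
qed

lemma fin_T3: "finite (T3 m1 m2 n1)"
  using fin_T2 unfolding T3_def by (auto intro: finite_subset)

lemma step1:
  assumes "0 \<le> m1"
  shows "card (T6 m1 m2 n1) = card (T6 (m1-1) m2 (n1-1)) + card (T1 m1 m2 n1)"
proof (rule split_card[where f="\<lambda>(a,b,c,d,e,f). (a,b,c,d,e,f+1)"
      and g="\<lambda>(a,b,c,d,e). (a,b,c,d,e,0)"])
  show "T6 m1 m2 n1 = (\<lambda>(a,b,c,d,e,f). (a,b,c,d,e,f+1)) ` T6 (m1-1) m2 (n1-1)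
     \<union> (\<lambda>(a,b,c,d,e). (a,b,c,d,e,0::int)) ` T1 m1 m2 n1"
  proof (rule set_eqI, rule iffI)
    fix x assume "x \<in> T6 m1 m2 n1"
    then obtain a b c d e f where x: "x = (a,b,c,d,e,f)" and h: "(a,b,c,d,e,f) \<in> T6 m1 m2 n1"
      by (cases x) auto
    show "x \<in> (\<lambda>(a,b,c,d,e,f). (a,b,c,d,e,f+1)) ` T6 (m1-1) m2 (n1-1)
     \<union> (\<lambda>(a,b,c,d,e). (a,b,c,d,e,0::int)) ` T1 m1 m2 n1"
    proof (cases "f = 0")
      case True
      hence "(a,b,c,d,e) \<in> T1 m1 m2 n1" using h unfolding T6_def T1_def by auto
      thus ?thesis using x True by (auto intro!: image_eqI[where x="(a,b,c,d,e)"])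
    next
      case False
      hence "(a,b,c,d,e,f-1) \<in> T6 (m1-1) m2 (n1-1)" using h unfolding T6_def by auto
      thus ?thesis using x by (auto intro!: image_eqI[where x="(a,b,c,d,e,f-1)"])
    qed
  next
    fix x assume "x \<in> (\<lambda>(a,b,c,d,e,f). (a,b,c,d,e,f+1)) ` T6 (m1-1) m2 (n1-1)
     \<union> (\<lambda>(a,b,c,d,e). (a,b,c,d,e,0::int)) ` T1 m1 m2 n1"
    thus "x \<in> T6 m1 m2 n1" using assms unfolding T6_def T1_def by auto
  qed
  show "(\<lambda>(a,b,c,d,e,f). (a,b,c,d,e,f+1)) ` T6 (m1-1) m2 (n1-1)
     \<inter> (\<lambda>(a,b,c,d,e). (a,b,c,d,e,0::int)) ` T1 m1 m2 n1 = {}"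
    unfolding T6_def T1_def by auto
qed (auto simp: inj_on_def fin_T6 fin_T1)

lemma step2:
  assumes "0 \<le> m2"
  shows "card (T1 m1 m2 n1) = card (T1 (m1+1) (m2-1) (n1-1)) + card (T2 m1 m2 n1)"
proof (rule split_card[where f="\<lambda>(a,b,c,d,e). (a,b,c,d,e+1)"
      and g="\<lambda>(a,b,c,y). (a,b,c,y+b-m2,0)"])
  show "T1 m1 m2 n1 = (\<lambda>(a,b,c,d,e). (a,b,c,d,e+1)) ` T1 (m1+1) (m2-1) (n1-1)
     \<union> (\<lambda>(a,b,c,y). (a,b,c,y+b-m2,0::int)) ` T2 m1 m2 n1"
  proof (rule set_eqI, rule iffI)
    fix x assume "x \<in> T1 m1 m2 n1"
    then obtain a b c d e where x: "x = (a,b,c,d,e)" and h: "(a,b,c,d,e) \<in> T1 m1 m2 n1"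
      by (cases x) auto
    show "x \<in> (\<lambda>(a,b,c,d,e). (a,b,c,d,e+1)) ` T1 (m1+1) (m2-1) (n1-1)
     \<union> (\<lambda>(a,b,c,y). (a,b,c,y+b-m2,0::int)) ` T2 m1 m2 n1"
    proof (cases "e = 0")
      case True
      hence "(a,b,c,m2+d-b) \<in> T2 m1 m2 n1" using h unfolding T2_def T1_def by auto
      thus ?thesis using x True by (auto intro!: image_eqI[where x="(a,b,c,m2+d-b)"])
    next
      case False
      hence "(a,b,c,d,e-1) \<in> T1 (m1+1) (m2-1) (n1-1)" using h unfolding T1_def by auto
      thus ?thesis using x by (auto intro!: image_eqI[where x="(a,b,c,d,e-1)"])
    qed
  next
    fix x assume "x \<in> (\<lambda>(a,b,c,d,e). (a,b,c,d,e+1)) ` T1 (m1+1) (m2-1) (n1-1)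
     \<union> (\<lambda>(a,b,c,y). (a,b,c,y+b-m2,0::int)) ` T2 m1 m2 n1"
    thus "x \<in> T1 m1 m2 n1" using assms unfolding T2_def T1_def by auto
  qed
  show "(\<lambda>(a,b,c,d,e). (a,b,c,d,e+1)) ` T1 (m1+1) (m2-1) (n1-1)
     \<inter> (\<lambda>(a,b,c,y). (a,b,c,y+b-m2,0::int)) ` T2 m1 m2 n1 = {}"
    unfolding T2_def T1_def by auto
qed (auto simp: inj_on_def fin_T2 fin_T1)

lemma step3:
  "card (T2 m1 m2 n1) = card (T2 (m1-1) m2 (n1-1)) + card (T3 m1 m2 n1)"
proof (rule split_card[where f="\<lambda>(a,b,c,y). (a+1,b,c,y)" and g="id"])
  show "T2 m1 m2 n1 = (\<lambda>(a,b,c,y). (a+1,b,c,y)) ` T2 (m1-1) m2 (n1-1) \<union> id ` T3 m1 m2 n1"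
  proof (rule set_eqI, rule iffI)
    fix x assume "x \<in> T2 m1 m2 n1"
    then obtain a b c y where x: "x = (a,b,c,y)" and h: "(a,b,c,y) \<in> T2 m1 m2 n1"
      by (cases x) auto
    show "x \<in> (\<lambda>(a,b,c,y). (a+1,b,c,y)) ` T2 (m1-1) m2 (n1-1) \<union> id ` T3 m1 m2 n1"
    proof (cases "a = 0 \<or> c+2*b+2*y = m1+2*m2")
      case True
      thus ?thesis using x h unfolding T3_def by auto
    next
      case False
      hence "(a-1,b,c,y) \<in> T2 (m1-1) m2 (n1-1)" using h unfolding T2_def by auto
      thus ?thesis using x by (auto intro!: image_eqI[where x="(a-1,b,c,y)"])
    qed
  next
    fix x assume "x \<in> (\<lambda>(a,b,c,y). (a+1,b,c,y)) ` T2 (m1-1) m2 (n1-1) \<union> id ` T3 m1 m2 n1"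
    thus "x \<in> T2 m1 m2 n1" unfolding T3_def T2_def by auto
  qed
  show "(\<lambda>(a,b,c,y). (a+1,b,c,y)) ` T2 (m1-1) m2 (n1-1) \<inter> id ` T3 m1 m2 n1 = {}"
    unfolding T3_def T2_def by auto
qed (auto simp: inj_on_def fin_T2 fin_T3)

theorem lemma6p4:
  fixes m1 m2 n1 :: int
  assumes "0 \<le> m1" and "0 \<le> m2" and "0 \<le> n1"
  shows "card (T6 m1 m2 n1) = card (T6 (m1-1) m2 (n1-1)) + card (T1 (m1+1) (m2-1) (n1-1))
           + card (T2 (m1-1) m2 (n1-1)) + card (T3 m1 m2 n1)"
  using step1[OF assms(1)] step2[OF assms(2), of m1 n1] step3[of m1 m2 n1] by simp

end
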